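(* Let $q$ be a prime power and $n\ge k\ge0$ integers. Let $V_1,\dots,V_k$ be subspaces of $\mathbb{F}_q^n$ such that $\dim\big(\sum_{i\in\Omega}V_i\big)\ge n-k+|\Omega|$ for all nonempty $\Omega\subseteq[k]$. Then there exist subspaces $V_i'\subseteq V_i$, $i=1,\dots,k$, such that (1) $\dim\big(\sum_{i\in\Omega}V_i'\big)\ge n-k+|\Omega|$ for all nonempty $\Omega\subseteq[k]$, and (2) $\dim V_i'=n-k+1$ for all $i\in[k]$. *)

theory Defs
  imports "HOL-Analysis.Analysis"
begin

end

theory Submission
  imports Defs
begin

lemma submod:
  fixes S T :: "('a::field ^ 'n) set"
  shows "vec.dim (S \<union> T) + vec.dim (vec.span S \<inter> vec.span T) = vec.dim S + vec.dim T"
proof -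
  have "vec.dim (S \<union> T) = vec.dim (vec.span (S \<union> T))" by simp
  also have "\<dots> = vec.dim {x + y |x y. x \<in> vec.span S \<and> y \<in> vec.span T}"
    by (simp only: vec.span_Un)
  finally show ?thesis
    using vec.dim_sums_Int[OF vec.subspace_span vec.subspace_span, of S T] by simp
qed

lemma hyperplane:
  fixes V :: "('a::field ^ 'n) set"
  assumes "vec.subspace V" "u \<in> V" "u \<noteq> 0"
  obtains H where "vec.subspace H" "H \<subseteq> V" "u \<notin> H" "V \<subseteq> vec.span (insert u H)"
proof -
  have "vec.independent {u}"
    using vec.independent_insertI[of u "{}"] assms(3) by simp
  then obtain B where B: "{u} \<subseteq> B" "B \<subseteq> V" "vec.independent B" "V \<subseteq> vec.span B"
    using vec.maximal_independent_subset_extend[of "{u}" V] assms(2) by blast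
  let ?H = "vec.span (B - {u})"
  have "u \<notin> ?H" using B(1,3) unfolding vec.dependent_def by blast
  moreover have "?H \<subseteq> V" using B(2) assms(1) by (meson Diff_subset order_trans vec.span_minimal)
  moreover have "B \<subseteq> insert u ?H" using vec.span_superset[of "B - {u}"] by blast
  then have "V \<subseteq> vec.span (insert u ?H)" using B(4) vec.span_mono by blast
  ultimately show ?thesis using that vec.subspace_span by blast
qed


definition good :: "nat \<Rightarrow> nat \<Rightarrow> (nat \<Rightarrow> ('a::field ^ 'n) set) \<Rightarrow> bool" where
  "good m k V \<longleftrightarrow> (\<forall>\<Omega>. \<Omega> \<subseteq> {1..k} \<and> \<Omega> \<noteq> {} \<longrightarrow> m + card \<Omega> \<le> vec.dim (\<Union>j\<in>\<Omega>. V j))"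

lemma step:
  fixes V :: "nat \<Rightarrow> ('a::field ^ 'n) set"
  assumes sub: "\<forall>j\<in>{1..k}. vec.subspace (V j)" and g: "good m k V"
    and i: "i \<in> {1..k}" and big: "m + 1 < vec.dim (V i)"
  shows "\<exists>H. vec.subspace H \<and> H \<subseteq> V i \<and> vec.dim H < vec.dim (V i) \<and> good m k (V(i:=H))"
proof -
  have gd: "m + card \<Omega> \<le> vec.dim (\<Union>j\<in>\<Omega>. V j)" if "\<Omega> \<subseteq> {1..k}" "\<Omega> \<noteq> {}" for \<Omega>
    using g that unfolding good_def by blast
  have Vi: "vec.subspace (V i)" using sub i by blast
  define T where "T \<Omega> \<longleftrightarrow> \<Omega> \<subseteq> {1..k} \<and> i \<in> \<Omega> \<and> 2 \<le> card \<Omega> \<and> vec.dim (\<Union>j\<in>\<Omega>. V j) = m + card \<Omega>" for \<Omega>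
  have key: "\<exists>u. u \<in> V i \<and> u \<noteq> 0 \<and> (\<forall>\<Omega>. T \<Omega> \<longrightarrow> u \<in> vec.span (\<Union>j\<in>\<Omega>-{i}. V j))"
  proof (cases "\<exists>\<Omega>. T \<Omega>")
    case False
    have "\<not> V i \<subseteq> {0}" using big vec.dim_eq_0[of "V i"] by linarith
    then obtain u where "u \<in> V i" "u \<noteq> 0" by blast
    then show ?thesis using False by blast
  next
    case True
    then obtain \<Omega>0 where O0: "T \<Omega>0" and minO: "\<And>\<Omega>. T \<Omega> \<Longrightarrow> card \<Omega>0 \<le> card \<Omega>"
      using ex_has_least_nat[of T _ card] by blast
    have O0s: "\<Omega>0 \<subseteq> {1..k}" "i \<in> \<Omega>0" "2 \<le> card \<Omega>0" "vec.dim (\<Union>j\<in>\<Omega>0. V j) = m + card \<Omega>0"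
      using O0 unfolding T_def by auto
    have fin0: "finite \<Omega>0" using O0s(1) finite_subset by blast
    define W where "W = (\<Union>j\<in>\<Omega>0-{i}. V j)"
    have "\<exists>u. u \<in> V i \<and> u \<noteq> 0 \<and> u \<in> vec.span W"
    proof (rule ccontr)
      assume "\<not> ?thesis"
      moreover have "vec.span (V i) = V i" using Vi vec.span_eq_iff[of "V i"] by blast
      ultimately have "vec.span (V i) \<inter> vec.span W \<subseteq> {0}" by blast
      then have z: "vec.dim (vec.span (V i) \<inter> vec.span W) = 0" by simp
      have un: "V i \<union> W = (\<Union>j\<in>\<Omega>0. V j)" unfolding W_def using O0s(2) by blast
      have cd: "card (\<Omega>0 - {i}) = card \<Omega>0 - 1" using O0s(2) fin0 by simp
      have ne: "\<Omega>0 - {i} \<noteq> {}"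
      proof
        assume "\<Omega>0 - {i} = {}"
        then have "card (\<Omega>0 - {i}) = 0" by (simp only: card.empty)
        then show False using cd O0s(3) by linarith
      qed
      have "m + card (\<Omega>0 - {i}) \<le> vec.dim W" unfolding W_def
        using gd[of "\<Omega>0 - {i}"] O0s(1) ne by blast
      moreover have "vec.dim (\<Union>j\<in>\<Omega>0. V j) = vec.dim (V i) + vec.dim W"
        using submod[of "V i" W] z unfolding un by simp
      ultimately show False using cd O0s(3,4) big by linarith
    qed
    then obtain u where u: "u \<in> V i" "u \<noteq> 0" "u \<in> vec.span W" by blast
    have "\<Omega>0 \<subseteq> \<Omega>" if TO: "T \<Omega>" for \<Omega>
    proof -
      have Os: "\<Omega> \<subseteq> {1..k}" "i \<in> \<Omega>" "2 \<le> card \<Omega>" "vec.dim (\<Union>j\<in>\<Omega>. V j) = m + card \<Omega>"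
        using TO unfolding T_def by auto
      have fin: "finite \<Omega>" using Os(1) finite_subset by blast
      let ?I = "\<Omega> \<inter> \<Omega>0" and ?U = "\<Omega> \<union> \<Omega>0"
      have cU: "m + card ?U \<le> vec.dim (\<Union>j\<in>?U. V j)" using gd[of ?U] Os(1) O0s(1) Os(2) by blast
      have cI: "m + card ?I \<le> vec.dim (\<Union>j\<in>?I. V j)" using gd[of ?I] Os(1) O0s(2) Os(2) by blast
      have sI: "(\<Union>j\<in>?I. V j) \<subseteq> vec.span (\<Union>j\<in>\<Omega>. V j) \<inter> vec.span (\<Union>j\<in>\<Omega>0. V j)"
        using vec.span_superset by blast
      have dI: "vec.dim (\<Union>j\<in>?I. V j) \<le> vec.dim (vec.span (\<Union>j\<in>\<Omega>. V j) \<inter> vec.span (\<Union>j\<in>\<Omega>0. V j))"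
        using vec.dim_subset[OF sI] .
      have uU: "(\<Union>j\<in>\<Omega>. V j) \<union> (\<Union>j\<in>\<Omega>0. V j) = (\<Union>j\<in>?U. V j)" by blast
      have cc: "card ?U + card ?I = card \<Omega> + card \<Omega>0" using card_Un_Int[OF fin fin0] by simp
      have sm: "vec.dim (\<Union>j\<in>?U. V j) + vec.dim (vec.span (\<Union>j\<in>\<Omega>. V j) \<inter> vec.span (\<Union>j\<in>\<Omega>0. V j))
          = vec.dim (\<Union>j\<in>\<Omega>. V j) + vec.dim (\<Union>j\<in>\<Omega>0. V j)"
        using submod[of "\<Union>j\<in>\<Omega>. V j" "\<Union>j\<in>\<Omega>0. V j"] unfolding uU .
      have eqI: "vec.dim (\<Union>j\<in>?I. V j) = m + card ?I"
        using sm cc cU cI dI Os(4) O0s(4) by linarith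
      have "2 \<le> card ?I"
      proof (rule ccontr)
        assume "\<not> 2 \<le> card ?I"
        moreover have "card ?I \<noteq> 0" using fin Os(2) O0s(2) by auto
        ultimately have "card ?I = 1" by linarith
        then have "?I = {i}" using Os(2) O0s(2) by (metis IntI card_1_singletonE singletonD)
        then show False using eqI big by simp
      qed
      then have "T ?I" unfolding T_def using Os(1) Os(2) O0s(2) eqI by blast
      then have "card \<Omega>0 \<le> card ?I" using minO by blast
      then have "?I = \<Omega>0" using card_subset_eq[OF fin0, of ?I] card_mono[OF fin0, of ?I] by auto
      then show ?thesis by blast
    qed
    then have "\<forall>\<Omega>. T \<Omega> \<longrightarrow> u \<in> vec.span (\<Union>j\<in>\<Omega>-{i}. V j)"
      using u(3) unfolding W_def by (meson Diff_mono UN_mono order_refl subsetD vec.span_mono)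
    then show ?thesis using u by blast
  qed
  then obtain u where u: "u \<in> V i" "u \<noteq> 0" "\<And>\<Omega>. T \<Omega> \<Longrightarrow> u \<in> vec.span (\<Union>j\<in>\<Omega>-{i}. V j)" by blast
  obtain H where H: "vec.subspace H" "H \<subseteq> V i" "u \<notin> H" "V i \<subseteq> vec.span (insert u H)"
    using hyperplane[OF Vi u(1,2)] by blast
  have e1: "vec.span H = H" using H(1) vec.span_eq_iff[of H] by blast
  have e2: "vec.span (V i) = V i" using Vi vec.span_eq_iff[of "V i"] by blast
  have "vec.span H \<subset> vec.span (V i)" unfolding e1 e2 using H(2,3) u(1) by blast
  then have dH: "vec.dim H < vec.dim (V i)" by (rule vec.dim_psubset)
  let ?V' = "V(i:=H)"
  have "good m k ?V'" unfolding good_def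
  proof (intro allI impI)
    fix \<Omega> :: "nat set" assume a: "\<Omega> \<subseteq> {1..k} \<and> \<Omega> \<noteq> {}"
    show "m + card \<Omega> \<le> vec.dim (\<Union>j\<in>\<Omega>. ?V' j)"
    proof (cases "i \<in> \<Omega>")
      case False
      then have "(\<Union>j\<in>\<Omega>. ?V' j) = (\<Union>j\<in>\<Omega>. V j)" by auto
      then show ?thesis using gd a by simp
    next
      case True
      let ?X = "\<Union>j\<in>\<Omega>. ?V' j"
      have HX: "H \<subseteq> ?X" using True by (metis UN_upper fun_upd_same)
      have "(\<Union>j\<in>\<Omega>. V j) \<subseteq> vec.span (insert u ?X)"
      proof
        fix x assume "x \<in> (\<Union>j\<in>\<Omega>. V j)"
        then obtain j where j: "j \<in> \<Omega>" "x \<in> V j" by blast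
        show "x \<in> vec.span (insert u ?X)"
        proof (cases "j = i")
          case True
          then have "x \<in> vec.span (insert u H)" using H(4) j by blast
          then show ?thesis using HX vec.span_mono[of "insert u H" "insert u ?X"] by blast
        next
          case False
          then have "x \<in> ?V' j" using j by simp
          then have "x \<in> ?X" using j by blast
          then have "x \<in> insert u ?X" by blast
          then show ?thesis using vec.span_superset[of "insert u ?X"] by blast
        qed
      qed
      then have "vec.dim (\<Union>j\<in>\<Omega>. V j) \<le> vec.dim (vec.span (insert u ?X))"
        by (rule vec.dim_subset)
      then have "vec.dim (\<Union>j\<in>\<Omega>. V j) \<le> vec.dim (insert u ?X)" by simp
      also have "\<dots> \<le> vec.dim ?X + 1" by (simp add: vec.dim_insert)
      finally have gen: "vec.dim (\<Union>j\<in>\<Omega>. V j) \<le> vec.dim ?X + 1" .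
      show ?thesis
      proof (cases "m + card \<Omega> + 1 \<le> vec.dim (\<Union>j\<in>\<Omega>. V j)")
        case True then show ?thesis using gen by linarith
      next
        case False
        have "m + card \<Omega> \<le> vec.dim (\<Union>j\<in>\<Omega>. V j)" using gd a by blast
        then have tight: "vec.dim (\<Union>j\<in>\<Omega>. V j) = m + card \<Omega>" using False by linarith
        have fin: "finite \<Omega>" using a finite_subset by blast
        have "card \<Omega> \<noteq> 1"
        proof
          assume "card \<Omega> = 1"
          then have "\<Omega> = {i}" using True by (metis card_1_singletonE singletonD)
          then show False using tight big by simp
        qed
        moreover have "card \<Omega> \<noteq> 0" using fin a by simp
        ultimately have "2 \<le> card \<Omega>" by linarith
        then have "T \<Omega>" unfolding T_def using a True tight by blast
        then have "u \<in> vec.span (\<Union>j\<in>\<Omega>-{i}. V j)" by (rule u(3))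
        moreover have "(\<Union>j\<in>\<Omega>-{i}. V j) \<subseteq> ?X" by auto
        ultimately have "u \<in> vec.span ?X" using vec.span_mono[of "\<Union>j\<in>\<Omega>-{i}. V j" ?X] by blast
        then have "vec.dim (insert u ?X) = vec.dim ?X" by (simp add: vec.dim_insert)
        then show ?thesis using tight \<open>vec.dim (\<Union>j\<in>\<Omega>. V j) \<le> vec.dim (insert u ?X)\<close> by linarith
      qed
    qed
  qed
  then show ?thesis using H dH by blast
qed

lemma main_ind:
  fixes V :: "nat \<Rightarrow> ('a::field ^ 'n) set"
  assumes "\<forall>j\<in>{1..k}. vec.subspace (V j)" "good m k V"
  shows "\<exists>V' :: nat \<Rightarrow> ('a ^ 'n) set.
           (\<forall>i\<in>{1..k}. vec.subspace (V' i) \<and> V' i \<subseteq> V i) \<and> good m k V' \<and>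
           (\<forall>i\<in>{1..k}. vec.dim (V' i) = m + 1)"
  using assms
proof (induction "\<Sum>j\<in>{1..k}. vec.dim (V j)" arbitrary: V rule: less_induct)
  case less
  show ?case
  proof (cases "\<forall>i\<in>{1..k}. vec.dim (V i) = m + 1")
    case True
    have "\<forall>i\<in>{1..k}. vec.subspace (V i) \<and> V i \<subseteq> V i" using less.prems(1) by blast
    then show ?thesis using less.prems(2) True by (intro exI[of _ V]) blast
  next
    case False
    then obtain i where i: "i \<in> {1..k}" "vec.dim (V i) \<noteq> m + 1" by blast
    have "m + card {i} \<le> vec.dim (\<Union>j\<in>{i}. V j)"
      using less.prems(2) i(1) unfolding good_def by blast
    then have big: "m + 1 < vec.dim (V i)" using i(2) by simp
    obtain H where H: "vec.subspace H" "H \<subseteq> V i" "vec.dim H < vec.dim (V i)" "good m k (V(i:=H))"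
      using step[OF less.prems i(1) big] by blast
    let ?V2 = "V(i:=H)"
    have s1: "(\<Sum>j\<in>{1..k}. vec.dim (V j)) = vec.dim (V i) + (\<Sum>j\<in>{1..k}-{i}. vec.dim (V j))"
      using i(1) by (simp add: sum.remove)
    have s2: "(\<Sum>j\<in>{1..k}. vec.dim (?V2 j)) = vec.dim H + (\<Sum>j\<in>{1..k}-{i}. vec.dim (V j))"
      using i(1) by (simp add: sum.remove)
    have lt: "(\<Sum>j\<in>{1..k}. vec.dim (?V2 j)) < (\<Sum>j\<in>{1..k}. vec.dim (V j))"
      using s1 s2 H(3) by linarith
    have sub2: "\<forall>j\<in>{1..k}. vec.subspace (?V2 j)"
    proof
      fix j assume "j \<in> {1..k}"
      then show "vec.subspace (?V2 j)" using less.prems(1) H(1) by (cases "j = i") auto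
    qed
    obtain V' where V': "\<forall>i\<in>{1..k}. vec.subspace (V' i) \<and> V' i \<subseteq> ?V2 i" "good m k V'"
      "\<forall>i\<in>{1..k}. vec.dim (V' i) = m + 1"
      using less.hyps[OF lt sub2 H(4)] by blast
    have "\<forall>j\<in>{1..k}. vec.subspace (V' j) \<and> V' j \<subseteq> V j"
    proof
      fix j assume j: "j \<in> {1..k}"
      then have "V' j \<subseteq> ?V2 j" "vec.subspace (V' j)" using V'(1) by auto
      moreover have "?V2 j \<subseteq> V j" using H(2) by (cases "j = i") auto
      ultimately show "vec.subspace (V' j) \<and> V' j \<subseteq> V j" by blast
    qed
    then show ?thesis using V'(2,3) by (intro exI[of _ V']) blast
  qed
qed

theorem mainTheorem10:
  fixes V :: "nat \<Rightarrow> ('a::{field,finite} ^ 'n) set" and k :: nat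
  assumes "k \<le> CARD('n)"
    and "\<forall>i\<in>{1..k}. vec.subspace (V i)"
    and "\<forall>\<Omega>. \<Omega> \<subseteq> {1..k} \<and> \<Omega> \<noteq> {} \<longrightarrow>
           vec.dim (vec.span (\<Union>i\<in>\<Omega>. V i)) \<ge> CARD('n) - k + card \<Omega>"
  shows "\<exists>V' :: nat \<Rightarrow> ('a ^ 'n) set.
           (\<forall>i\<in>{1..k}. vec.subspace (V' i) \<and> V' i \<subseteq> V i) \<and>
           (\<forall>\<Omega>. \<Omega> \<subseteq> {1..k} \<and> \<Omega> \<noteq> {} \<longrightarrow>
              vec.dim (vec.span (\<Union>i\<in>\<Omega>. V' i)) \<ge> CARD('n) - k + card \<Omega>) \<and>
           (\<forall>i\<in>{1..k}. vec.dim (V' i) = CARD('n) - k + 1)"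
proof -
  have "good (CARD('n) - k) k V" using assms(3) unfolding good_def vec.dim_span .
  from main_ind[OF assms(2) this] obtain V' :: "nat \<Rightarrow> ('a ^ 'n) set" where
      V1: "\<forall>i\<in>{1..k}. vec.subspace (V' i) \<and> V' i \<subseteq> V i" and
      V2: "good (CARD('n) - k) k V'" and V3: "\<forall>i\<in>{1..k}. vec.dim (V' i) = CARD('n) - k + 1"
    by (elim exE conjE)
  have V4: "\<forall>\<Omega>. \<Omega> \<subseteq> {1..k} \<and> \<Omega> \<noteq> {} \<longrightarrow>
              vec.dim (vec.span (\<Union>i\<in>\<Omega>. V' i)) \<ge> CARD('n) - k + card \<Omega>"
    using V2 unfolding good_def vec.dim_span .
  show ?thesis by (rule exI[of _ V'], intro conjI, fact V1, fact V4, fact V3)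
qed

end
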